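(* Let $p \geq 5$ and let $L$ be the Laplacian of the graph $K_p \oplus C_\infty$. Let $E_K \subset l^2$ be the span of the vectors $e_{-1}-e_{-k}$, $k = 2,\ldots,p-1$ (equivalently, the set of $v \in l^2$ supported on $\{-p+1,\ldots,-1\}$ with $\sum_{j=-p+1}^{-1} v_j = 0$), and let $E_K^\perp$ be its orthogonal complement in $l^2$. For $\lambda > 4$ set $$\sigma_+(\lambda) = \tfrac12\Big[(2-\lambda) + \sqrt{(2-\lambda)^2-4}\Big], \qquad F(\lambda) = (1-\lambda)\sigma_+(\lambda) - (p-\lambda)(1-\lambda) + (p-1).$$ Then $\lambda > 4$ is an eigenvalue of $L$ with a corresponding eigenvector $v \in l^2 \cap E_K^\perp$ if and only if $F(\lambda) = 0$. Furthermore, $F(\lambda)=0$ has exactly one solution in $(p,p+2)$ and no solutions in $(4,p] \cup [p+2,+\infty)$.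
   Context: The graph $K_p \oplus C_\infty$ has vertex set $\{-p+1,\ldots,0\} \cup \{1,2,3,\ldots\}$, with edges between every pair of distinct vertices in $\{-p+1,\ldots,0\}$, the edge $\{0,1\}$, and the edges $\{j,j+1\}$ for all $j \geq 1$. $l^2$ is the real Hilbert space of square-summable real functions on the vertex set, with the standard inner product; $e_j$ is the indicator vector of vertex $j$. The Laplacian acts by $(Lv)_i = \deg(i)\, v_i - \sum_{j \sim i} v_j$. An eigenvalue with eigenvector $v \in l^2$, $v \neq 0$, means $Lv = \lambda v$. *)

theory Defs
  imports "HOL-Analysis.Analysis"
begin

definition KC_vertices :: "nat \<Rightarrow> int set" where
  "KC_vertices p = {i. 1 - int p \<le> i}"

definition KC_adj :: "nat \<Rightarrow> int \<Rightarrow> int \<Rightarrow> bool" where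
  "KC_adj p i j \<longleftrightarrow> i \<in> KC_vertices p \<and> j \<in> KC_vertices p \<and>
     ((i \<le> 0 \<and> j \<le> 0 \<and> i \<noteq> j) \<or> (i \<ge> 0 \<and> j = i + 1) \<or> (j \<ge> 0 \<and> i = j + 1))"

definition KC_nbrs :: "nat \<Rightarrow> int \<Rightarrow> int set" where
  "KC_nbrs p i = {j. KC_adj p i j}"

definition KC_deg :: "nat \<Rightarrow> int \<Rightarrow> nat" where
  "KC_deg p i = card (KC_nbrs p i)"

definition KC_laplacian :: "nat \<Rightarrow> (int \<Rightarrow> real) \<Rightarrow> int \<Rightarrow> real" where
  "KC_laplacian p v i = real (KC_deg p i) * v i - (\<Sum>j\<in>KC_nbrs p i. v j)"

definition KC_l2 :: "nat \<Rightarrow> (int \<Rightarrow> real) set" where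
  "KC_l2 p = {v. (\<forall>i. i \<notin> KC_vertices p \<longrightarrow> v i = 0) \<and>
                 (\<lambda>i. (v i)\<^sup>2) summable_on KC_vertices p}"

definition KC_inner :: "nat \<Rightarrow> (int \<Rightarrow> real) \<Rightarrow> (int \<Rightarrow> real) \<Rightarrow> real" where
  "KC_inner p v w = infsum (\<lambda>i. v i * w i) (KC_vertices p)"

definition E_K :: "nat \<Rightarrow> (int \<Rightarrow> real) set" where
  "E_K p = {v \<in> KC_l2 p. (\<forall>i. i \<notin> {1 - int p..-1} \<longrightarrow> v i = 0) \<and>
                          (\<Sum>j\<in>{1 - int p..-1}. v j) = 0}"

definition E_K_perp :: "nat \<Rightarrow> (int \<Rightarrow> real) set" where
  "E_K_perp p = {v \<in> KC_l2 p. \<forall>w \<in> E_K p. KC_inner p v w = 0}"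

definition eigen_in_EKperp :: "nat \<Rightarrow> real \<Rightarrow> bool" where
  "eigen_in_EKperp p lam \<longleftrightarrow> (\<exists>v. v \<in> KC_l2 p \<and> v \<in> E_K_perp p \<and> v \<noteq> (\<lambda>_. 0) \<and>
       (\<forall>i\<in>KC_vertices p. KC_laplacian p v i = lam * v i))"

definition sigma_plus :: "real \<Rightarrow> real" where
  "sigma_plus lam = ((2 - lam) + sqrt ((2 - lam)\<^sup>2 - 4)) / 2"

definition F_KC :: "nat \<Rightarrow> real \<Rightarrow> real" where
  "F_KC p lam = (1 - lam) * sigma_plus lam - (real p - lam) * (1 - lam) + (real p - 1)"

end

theory Submission
  imports Defs
begin

lemma nbrs_clique:
  assumes "1 - int p \<le> i" "i \<le> -1"
  shows "KC_nbrs p i = {1 - int p..0} - {i}"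
  using assms unfolding KC_nbrs_def KC_adj_def KC_vertices_def by auto

lemma nbrs_zero:
  assumes "p \<ge> 1"
  shows "KC_nbrs p 0 = insert 1 {1 - int p..-1}"
  using assms unfolding KC_nbrs_def KC_adj_def KC_vertices_def by auto

lemma nbrs_pos:
  assumes "i \<ge> 1" "p \<ge> 1"
  shows "KC_nbrs p i = {i - 1, i + 1}"
  using assms unfolding KC_nbrs_def KC_adj_def KC_vertices_def by auto

lemma lap_clique:
  assumes "1 - int p \<le> i" "i \<le> -1" "\<And>j. 1 - int p \<le> j \<Longrightarrow> j \<le> -1 \<Longrightarrow> v j = c"
  shows "KC_laplacian p v i = c - v 0"
proof -
  have i: "i \<in> {1 - int p..-1}" using assms by auto
  have e: "{1 - int p..0} - {i} = insert 0 ({1 - int p..-1} - {i})" using assms by auto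
  have cd: "card ({1 - int p..-1} - {i}) = p - 2" using i by (simp add: card_Diff_singleton)
  have cd2: "card ({1 - int p..0} - {i}) = p - 1" using i assms by (simp add: card_Diff_singleton)
  have p2: "p \<ge> 2" using assms by linarith
  have "(\<Sum>j\<in>{1 - int p..0} - {i}. v j) = v 0 + (\<Sum>j\<in>{1 - int p..-1} - {i}. v j)"
    unfolding e by (subst sum.insert) auto
  also have "(\<Sum>j\<in>{1 - int p..-1} - {i}. v j) = (\<Sum>j\<in>{1 - int p..-1} - {i}. c)"
    by (rule sum.cong) (auto intro: assms(3))
  also have "\<dots> = real (p - 2) * c" using cd by simp
  finally have s: "(\<Sum>j\<in>{1 - int p..0} - {i}. v j) = v 0 + real (p - 2) * c" .
  show ?thesis unfolding KC_laplacian_def KC_deg_def nbrs_clique[OF assms(1,2)] s cd2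
    using assms(3)[OF assms(1,2)] p2 by (simp add: of_nat_diff algebra_simps)
qed

lemma lap_zero:
  assumes "p \<ge> 1" "\<And>j. 1 - int p \<le> j \<Longrightarrow> j \<le> -1 \<Longrightarrow> v j = c"
  shows "KC_laplacian p v 0 = real p * v 0 - (real (p - 1) * c + v 1)"
proof -
  have cd: "card (insert 1 {1 - int p..-1}) = p" using assms by simp
  have "(\<Sum>j\<in>{1 - int p..-1}. v j) = (\<Sum>j\<in>{1 - int p..-1}. c)"
    by (rule sum.cong) (auto intro: assms(2))
  also have "\<dots> = real (p - 1) * c" using assms(1) by (simp add: nat_diff_distrib)
  finally have s: "(\<Sum>j\<in>{1 - int p..-1}. v j) = real (p - 1) * c" .
  show ?thesis unfolding KC_laplacian_def KC_deg_def nbrs_zero[OF assms(1)] cd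
    by (subst sum.insert) (auto simp: s)
qed

lemma lap_pos:
  assumes "i \<ge> 1" "p \<ge> 1"
  shows "KC_laplacian p v i = 2 * v i - v (i - 1) - v (i + 1)"
  unfolding KC_laplacian_def KC_deg_def nbrs_pos[OF assms] by simp

lemma sig_facts:
  fixes lam :: real
  assumes "lam > 4"
  defines "S \<equiv> sqrt ((2 - lam)\<^sup>2 - 4)"
  shows "S \<ge> 0" "S\<^sup>2 = (2 - lam)\<^sup>2 - 4" "sigma_plus lam = ((2 - lam) + S) / 2"
    "sigma_plus lam < 0" "sigma_plus lam > -1"
    "(sigma_plus lam)\<^sup>2 - (2 - lam) * sigma_plus lam + 1 = 0"
    "sigma_plus lam * (((2 - lam) - S) / 2) = 1"
    "((2 - lam) - S) / 2 < -1"
    "sigma_plus lam + ((2 - lam) - S) / 2 = 2 - lam"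
proof -
  have pos: "(2 - lam)\<^sup>2 - 4 \<ge> 0" proof -
    have "(2 - lam)\<^sup>2 - 4 = (lam - 4) * lam" by (simp add: power2_eq_square algebra_simps)
    thus ?thesis using assms by simp
  qed
  show S0: "S \<ge> 0" unfolding S_def using pos by simp
  show S2: "S\<^sup>2 = (2 - lam)\<^sup>2 - 4" unfolding S_def using pos by (simp del: power2_eq_square)
  show sp: "sigma_plus lam = ((2 - lam) + S) / 2" unfolding sigma_plus_def S_def ..
  have "S\<^sup>2 < (lam - 2)\<^sup>2" using S2 by (simp add: power2_eq_square algebra_simps)
  hence "S < lam - 2" using S0 assms(1) by (smt (verit) power_mono)
  thus "sigma_plus lam < 0" using sp by simp
  have "(lam - 4)\<^sup>2 < S\<^sup>2" using S2 assms(1) by (simp add: power2_eq_square algebra_simps)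
  hence "lam - 4 < S" using S0 assms(1) by (smt (verit) power_mono)
  thus "sigma_plus lam > -1" using sp by simp
  show "(sigma_plus lam)\<^sup>2 - (2 - lam) * sigma_plus lam + 1 = 0"
    unfolding sp using S2 by (simp add: power2_eq_square field_simps)
  show "sigma_plus lam * (((2 - lam) - S) / 2) = 1"
    unfolding sp using S2 by (simp add: power2_eq_square field_simps)
  show "((2 - lam) - S) / 2 < -1" using S0 assms(1) by simp
  show "sigma_plus lam + ((2 - lam) - S) / 2 = 2 - lam" unfolding sp by (simp add: field_simps)
qed

lemma fs_summable:
  assumes "finite T" "\<And>x. x \<in> S \<Longrightarrow> x \<notin> T \<Longrightarrow> f x = 0"
  shows "f summable_on S"
proof -
  have "f summable_on (S \<inter> T)" using assms(1) by simp
  thus ?thesis by (subst summable_on_cong_neutral[of "S \<inter> T" S f f]) (auto intro: assms(2))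
qed

lemma fs_infsum:
  fixes f :: "'a \<Rightarrow> real"
  assumes "finite T" "\<And>x. x \<in> S \<Longrightarrow> x \<notin> T \<Longrightarrow> f x = 0"
  shows "infsum f S = sum f (S \<inter> T)"
proof -
  have "infsum f S = infsum f (S \<inter> T)"
    by (rule infsum_cong_neutral) (auto intro: assms(2))
  thus ?thesis using assms(1) by simp
qed

lemma perp_const:
  assumes v: "v \<in> E_K_perp p" and a: "a \<in> {1 - int p..-1}" and b: "b \<in> {1 - int p..-1}"
  shows "v a = v b"
proof (cases "a = b")
  case True thus ?thesis by simp
next
  case False
  define w :: "int \<Rightarrow> real" where "w i = (if i = a then 1 else 0) - (if i = b then 1 else 0)" for i
  have wz: "w i = 0" if "i \<notin> {a, b}" for i using that unfolding w_def by auto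
  have "w \<in> KC_l2 p"
    unfolding KC_l2_def
  proof (intro CollectI conjI allI impI)
    fix i assume "i \<notin> KC_vertices p" thus "w i = 0" using a b wz by (auto simp: KC_vertices_def)
  next
    show "(\<lambda>i. (w i)\<^sup>2) summable_on KC_vertices p"
      by (rule fs_summable[of "{a,b}"]) (auto simp: wz)
  qed
  moreover have "(\<Sum>j\<in>{1 - int p..-1}. w j) = 0"
    unfolding w_def using a b by (simp add: sum_subtractf)
  moreover have "\<forall>i. i \<notin> {1 - int p..-1} \<longrightarrow> w i = 0" using a b wz by auto
  ultimately have wE: "w \<in> E_K p" unfolding E_K_def by blast
  have "KC_inner p v w = 0" using v wE unfolding E_K_perp_def by blast
  moreover have "KC_inner p v w = (\<Sum>i\<in>KC_vertices p \<inter> {a,b}. v i * w i)"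
    unfolding KC_inner_def by (rule fs_infsum) (auto simp: wz)
  moreover have "KC_vertices p \<inter> {a,b} = {a,b}" using a b by (auto simp: KC_vertices_def)
  ultimately show ?thesis using False by (simp add: w_def)
qed

lemma backward:
  fixes lam :: real
  assumes p: "p \<ge> 5" and lam: "lam > 4" and F: "F_KC p lam = 0"
  shows "eigen_in_EKperp p lam"
proof -
  define s where "s = sigma_plus lam"
  have s0: "s < 0" "s > -1" and sq: "s\<^sup>2 - (2 - lam) * s + 1 = 0"
    using sig_facts[OF lam] unfolding s_def by auto
  define v :: "int \<Rightarrow> real" where
    "v i = (if i < 1 - int p then 0 else if i \<le> -1 then 1 else (1 - lam) * s ^ nat i)" for i
  have vc: "v j = 1" if "1 - int p \<le> j" "j \<le> -1" for j using that by (simp add: v_def)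
  have vnat: "v (int n) = (1 - lam) * s ^ n" for n using p by (simp add: v_def)
  have v0: "v 0 = 1 - lam" using vnat[of 0] by simp
  have l2: "v \<in> KC_l2 p"
    unfolding KC_l2_def
  proof (intro CollectI conjI allI impI)
    fix i assume "i \<notin> KC_vertices p" thus "v i = 0" by (simp add: KC_vertices_def v_def)
  next
    have A: "(\<lambda>i. (v i)\<^sup>2) summable_on {1 - int p..-1}" by simp
    have "summable (\<lambda>n. (1 - lam)\<^sup>2 * (s\<^sup>2) ^ n)"
      by (rule summable_mult, rule summable_geometric) (use s0 in \<open>simp add: abs_square_less_1\<close>)
    hence "(\<lambda>n. (1 - lam)\<^sup>2 * (s\<^sup>2) ^ n) summable_on UNIV"
      by (subst summable_on_UNIV_nonneg_real_iff) auto
    hence "((\<lambda>i. (v i)\<^sup>2) \<circ> int) summable_on UNIV"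
      by (simp add: o_def vnat power_mult_distrib power_mult[symmetric] mult.commute[of 2])
    hence B: "(\<lambda>i. (v i)\<^sup>2) summable_on (int ` UNIV)"
      by (subst summable_on_reindex) auto
    have "(\<lambda>i. (v i)\<^sup>2) summable_on ({1 - int p..-1} \<union> int ` UNIV)"
      using A B by (rule summable_on_union)
    moreover have "{1 - int p..-1} \<union> int ` UNIV = KC_vertices p"
    proof (rule set_eqI)
      fix x :: int
      show "x \<in> {1 - int p..-1} \<union> int ` UNIV \<longleftrightarrow> x \<in> KC_vertices p"
      proof (cases "x \<le> -1")
        case True thus ?thesis by (auto simp: KC_vertices_def)
      next
        case False
        hence "x = int (nat x)" by simp
        hence "x \<in> int ` UNIV" by blast
        thus ?thesis using False assms(1) by (auto simp: KC_vertices_def)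
      qed
    qed
    ultimately show "(\<lambda>i. (v i)\<^sup>2) summable_on KC_vertices p" by simp
  qed
  have perp: "v \<in> E_K_perp p"
    unfolding E_K_perp_def
  proof (intro CollectI conjI ballI l2)
    fix w assume w: "w \<in> E_K p"
    have "KC_inner p v w = (\<Sum>i\<in>KC_vertices p \<inter> {1 - int p..-1}. v i * w i)"
      unfolding KC_inner_def by (rule fs_infsum) (use w in \<open>auto simp: E_K_def\<close>)
    also have "KC_vertices p \<inter> {1 - int p..-1} = {1 - int p..-1}" by (auto simp: KC_vertices_def)
    also have "(\<Sum>i\<in>{1 - int p..-1}. v i * w i) = (\<Sum>i\<in>{1 - int p..-1}. w i)"
      by (rule sum.cong) (auto simp: vc)
    also have "\<dots> = 0" using w by (simp add: E_K_def)
    finally show "KC_inner p v w = 0" .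
  qed
  have nz: "v \<noteq> (\<lambda>_. 0)"
  proof
    assume "v = (\<lambda>_. 0)"
    hence "v (-1) = 0" by simp
    moreover have "v (-1) = 1" using p by (intro vc) auto
    ultimately show False by simp
  qed
  have eig: "KC_laplacian p v i = lam * v i" if i: "i \<in> KC_vertices p" for i
  proof -
    consider "i \<le> -1" | "i = 0" | "i \<ge> 1" by linarith
    thus ?thesis
    proof cases
      case 1
      hence "1 - int p \<le> i" using i by (simp add: KC_vertices_def)
      thus ?thesis using lap_clique[of p i v 1] vc 1 v0 by simp
    next
      case 2
      have "KC_laplacian p v 0 = real p * v 0 - (real (p - 1) * 1 + v 1)"
        using lap_zero[of p v 1] vc p by simp
      also have "v 1 = (1 - lam) * s" using vnat[of 1] by simp
      finally have "KC_laplacian p v 0 = real p * (1 - lam) - (real p - 1 + (1 - lam) * s)"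
        using p v0 by (simp add: of_nat_diff)
      moreover have "(1 - lam) * s - (real p - lam) * (1 - lam) + (real p - 1) = 0"
        using F unfolding F_KC_def s_def by simp
      ultimately have "KC_laplacian p v 0 = lam * (1 - lam)" by (simp add: algebra_simps) 
      thus ?thesis using 2 v0 by simp
    next
      case 3
      define n where "n = nat (i - 1)"
      have n: "i = int (Suc n)" using 3 by (simp add: n_def)
      have e1: "v i = (1 - lam) * s ^ Suc n" using vnat[of "Suc n"] n by simp
      have e2: "v (i - 1) = (1 - lam) * s ^ n" using vnat[of n] n by simp
      have e3: "v (i + 1) = (1 - lam) * s ^ Suc (Suc n)" using vnat[of "Suc (Suc n)"] n by simp
      have key: "2 * s - 1 - s\<^sup>2 = lam * s" using sq by (simp add: algebra_simps)
      have "KC_laplacian p v i = 2 * v i - v (i - 1) - v (i + 1)" using lap_pos[of i p v] 3 p by simp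
      also have "\<dots> = (1 - lam) * s ^ n * (2 * s - 1 - s\<^sup>2)"
        unfolding e1 e2 e3 by (simp add: algebra_simps power2_eq_square)
      also have "\<dots> = lam * v i" unfolding key e1 by (simp add: algebra_simps)
      finally show ?thesis .
    qed
  qed
  show ?thesis unfolding eigen_in_EKperp_def using l2 perp nz eig by blast
qed

lemma forward:
  fixes lam :: real
  assumes p: "p \<ge> 5" and lam: "lam > 4" and ev: "eigen_in_EKperp p lam"
  shows "F_KC p lam = 0"
proof -
  obtain v where l2: "v \<in> KC_l2 p" and perp: "v \<in> E_K_perp p" and nz: "v \<noteq> (\<lambda>_. 0)"
    and eig: "\<And>i. i \<in> KC_vertices p \<Longrightarrow> KC_laplacian p v i = lam * v i"
    using ev unfolding eigen_in_EKperp_def by blast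
  define s where "s = sigma_plus lam"
  define m where "m = ((2 - lam) - sqrt ((2 - lam)\<^sup>2 - 4)) / 2"
  have sm: "s * m = 1" "m < -1" "s + m = 2 - lam"
    unfolding s_def m_def using sig_facts(7-9)[OF lam] by blast+
  define c where "c = v (-1)"
  have vc: "v j = c" if "1 - int p \<le> j" "j \<le> -1" for j
    unfolding c_def by (rule perp_const[OF perp]) (use that p in auto)
  define a where "a = v 0"
  have m1: "-1 \<in> KC_vertices p" "0 \<in> KC_vertices p" using p by (auto simp: KC_vertices_def)
  have eqc: "c - a = lam * c"
  proof -
    have "KC_laplacian p v (-1) = c - v 0" by (rule lap_clique) (use p vc in auto)
    moreover have "v (-1) = c" using vc p by simp
    ultimately show ?thesis using eig[OF m1(1)] unfolding a_def by simp
  qed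
  have eq0: "real p * a - (real (p - 1) * c + v 1) = lam * a"
  proof -
    have "KC_laplacian p v 0 = real p * v 0 - (real (p - 1) * c + v 1)" by (rule lap_zero) (use p vc in auto)
    thus ?thesis using eig[OF m1(2)] unfolding a_def by simp
  qed
  define w where "w n = v (int n)" for n
  have rec: "w (Suc (Suc n)) = (2 - lam) * w (Suc n) - w n" for n
  proof -
    have "int (Suc n) \<in> KC_vertices p" by (simp add: KC_vertices_def)
    from eig[OF this] lap_pos[of "int (Suc n)" p v] p
    have "2 * v (int (Suc n)) - v (int n) - v (int (Suc (Suc n))) = lam * v (int (Suc n))"
      by simp
    thus ?thesis unfolding w_def by (simp add: algebra_simps)
  qed
  define u where "u n = w (Suc n) - s * w n" for n
  have urec: "u (Suc n) = m * u n" for n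
  proof -
    have "u (Suc n) - m * u n = (2 - lam - s - m) * w (Suc n) + (s * m - 1) * w n"
      unfolding u_def rec by (simp add: algebra_simps)
    moreover have "2 - lam - s - m = 0" "s * m - 1 = 0" using sm by simp_all
    ultimately show ?thesis by simp
  qed
  have upow: "u n = m ^ n * u 0" for n by (induction n) (simp_all add: urec)
  have wlim: "w \<longlonglongrightarrow> 0"
  proof -
    have "(\<lambda>i. (v i)\<^sup>2) summable_on KC_vertices p" using l2 by (simp add: KC_l2_def)
    moreover have "int ` UNIV \<subseteq> KC_vertices p" using p by (auto simp: KC_vertices_def)
    ultimately have "(\<lambda>i. (v i)\<^sup>2) summable_on (int ` UNIV)" by (rule summable_on_subset_banach)
    hence "((\<lambda>i. (v i)\<^sup>2) \<circ> int) summable_on UNIV" by (subst (asm) summable_on_reindex) auto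
    hence "(\<lambda>n. (w n)\<^sup>2) summable_on UNIV" by (simp add: o_def w_def)
    hence "summable (\<lambda>n. (w n)\<^sup>2)" by (subst (asm) summable_on_UNIV_nonneg_real_iff) auto
    hence "(\<lambda>n. (w n)\<^sup>2) \<longlonglongrightarrow> 0" by (rule summable_LIMSEQ_zero)
    hence "(\<lambda>n. sqrt ((w n)\<^sup>2)) \<longlonglongrightarrow> sqrt 0" by (rule tendsto_real_sqrt)
    hence "(\<lambda>n. \<bar>w n\<bar>) \<longlonglongrightarrow> 0" by simp
    thus ?thesis by (rule tendsto_rabs_zero_cancel)
  qed
  have ulim: "u \<longlonglongrightarrow> 0"
  proof -
    have "(\<lambda>n. w (Suc n) - s * w n) \<longlonglongrightarrow> 0 - s * 0"
      by (intro tendsto_intros wlim[THEN LIMSEQ_Suc] wlim)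
    thus ?thesis unfolding u_def[abs_def] by simp
  qed
  have u0: "u 0 = 0"
  proof (rule ccontr)
    assume ne: "u 0 \<noteq> 0"
    have ge: "\<bar>u n\<bar> \<ge> \<bar>u 0\<bar>" for n
    proof -
      have "1 \<le> \<bar>m\<bar> ^ n" using sm(2) by (intro one_le_power) simp
      hence "1 * \<bar>u 0\<bar> \<le> \<bar>m\<bar> ^ n * \<bar>u 0\<bar>" by (intro mult_right_mono) auto
      thus ?thesis unfolding upow[of n] by (simp add: abs_mult power_abs)
    qed
    have "\<forall>\<^sub>F n in sequentially. dist (u n) 0 < \<bar>u 0\<bar>"
      using ulim ne by (simp add: tendsto_iff)
    then obtain n where "\<bar>u n\<bar> < \<bar>u 0\<bar>" by (auto dest: eventually_happens)
    with ge[of n] show False by simp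
  qed
  have wstep: "w (Suc n) = s * w n" for n using upow[of n] u0 unfolding u_def by simp
  have w0: "w 0 = a" by (simp add: w_def a_def)
  have v1: "v 1 = s * a" using wstep[of 0] w0 by (simp add: w_def)
  have cnz: "c \<noteq> 0"
  proof
    assume c0: "c = 0"
    hence a0: "a = 0" using eqc by simp
    have wz: "w n = 0" for n by (induction n) (simp_all add: wstep w0 a0)
    have "v = (\<lambda>_. 0)"
    proof
      fix i
      show "v i = 0"
      proof (cases "i \<ge> 0")
        case True
        hence "v i = w (nat i)" by (simp add: w_def)
        thus ?thesis by (simp add: wz)
      next
        case False
        show ?thesis
        proof (cases "1 - int p \<le> i")
          case True thus ?thesis using vc[of i] False c0 by simp
        next
          case False thus ?thesis using l2 by (auto simp: KC_l2_def KC_vertices_def)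
        qed
      qed
    qed
    with nz show False by simp
  qed
  have ac: "a = (1 - lam) * c" using eqc by (simp add: algebra_simps)
  have "(real p * (1 - lam) - (real p - 1) - s * (1 - lam) - lam * (1 - lam)) * c = 0"
    using eq0 p unfolding v1 ac by (simp add: of_nat_diff algebra_simps)
  hence "real p * (1 - lam) - (real p - 1) - s * (1 - lam) - lam * (1 - lam) = 0" using cnz by simp
  thus ?thesis unfolding F_KC_def s_def[symmetric] by (simp add: algebra_simps)
qed

lemma F_pos:
  assumes "4 < lam" "lam \<le> real p"
  shows "F_KC p lam > 0"
proof -
  have s: "sigma_plus lam < 0" using sig_facts(4)[OF assms(1)] .
  have "(1 - lam) * sigma_plus lam > 0" using s assms(1) by (simp add: mult_neg_neg)
  moreover have "(real p - lam) * (1 - lam) \<le> 0" using assms by (simp add: mult_nonneg_nonpos)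
  moreover have "real p - 1 > 0" using assms by simp
  ultimately show ?thesis unfolding F_KC_def by linarith
qed

lemma F_neg:
  assumes "real p + 2 \<le> lam" "4 < lam"
  shows "F_KC p lam < 0"
proof -
  have s: "sigma_plus lam > -1" using sig_facts(5)[OF assms(2)] .
  have "(lam - 1) * (- sigma_plus lam) < (lam - 1) * 1"
    by (rule mult_strict_left_mono) (use s assms(2) in auto)
  hence "(1 - lam) * sigma_plus lam < (lam - 1)" by (simp add: algebra_simps)
  moreover have "(real p - lam) * (1 - lam) \<ge> 2 * (lam - 1)"
  proof -
    have "(real p - lam) * (1 - lam) = (lam - real p) * (lam - 1)" by (simp add: algebra_simps)
    also have "\<dots> \<ge> 2 * (lam - 1)" using assms by (intro mult_right_mono) auto
    finally show ?thesis .
  qed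
  ultimately show ?thesis unfolding F_KC_def using assms by argo
qed

lemma s_mono:
  assumes "4 < l1" "l1 < l2"
  shows "sigma_plus l1 < sigma_plus l2"
proof -
  have l2: "4 < l2" using assms by simp
  define S1 where "S1 = sqrt ((2 - l1)\<^sup>2 - 4)"
  define S2 where "S2 = sqrt ((2 - l2)\<^sup>2 - 4)"
  have "(2 - l1)\<^sup>2 < (2 - l2)\<^sup>2"
  proof -
    have "(l1 - 2)\<^sup>2 < (l2 - 2)\<^sup>2" using assms by (intro power_strict_mono) auto
    thus ?thesis by (simp add: power2_commute)
  qed
  hence "S1 < S2" unfolding S1_def S2_def by (intro real_sqrt_less_mono) simp
  define m1 where "m1 = ((2 - l1) - S1) / 2"
  define m2 where "m2 = ((2 - l2) - S2) / 2"
  have "m2 < m1" unfolding m1_def m2_def using \<open>S1 < S2\<close> assms by simp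
  have a1: "sigma_plus l1 * m1 = 1" "m1 < -1"
    using sig_facts(7,8)[OF assms(1)] unfolding m1_def S1_def by blast+
  have a2: "sigma_plus l2 * m2 = 1" "m2 < -1"
    using sig_facts(7,8)[OF l2] unfolding m2_def S2_def by blast+
  have e1: "sigma_plus l1 = 1 / m1" using a1 by (simp add: field_simps)
  have e2: "sigma_plus l2 = 1 / m2" using a2 by (simp add: field_simps)
  show ?thesis unfolding e1 e2 using \<open>m2 < m1\<close> a1(2) a2(2)
    by (simp add: inverse_eq_divide[symmetric] inverse_less_iff_less_neg)
qed

lemma root_form:
  assumes "4 < lam" "F_KC p lam = 0"
  shows "sigma_plus lam = real p - lam + (real p - 1) / (lam - 1)"
proof -
  have "(lam - 1) * (sigma_plus lam - (real p - lam)) = real p - 1"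
    using assms(2) unfolding F_KC_def by (simp add: algebra_simps)
  hence "sigma_plus lam - (real p - lam) = (real p - 1) / (lam - 1)"
    using assms(1) by (simp add: eq_divide_eq mult.commute)
  thus ?thesis by linarith
qed

lemma F_cont: "isCont (F_KC p) x"
  unfolding F_KC_def[abs_def] sigma_plus_def by (intro continuous_intros) auto

lemma no_two_roots:
  assumes "4 < l1" "l1 < l2" "F_KC p l1 = 0" "F_KC p l2 = 0" "p \<ge> 1"
  shows False
proof -
  have "sigma_plus l1 < sigma_plus l2" using s_mono assms by blast
  moreover have "sigma_plus l1 = real p - l1 + (real p - 1) / (l1 - 1)" using root_form assms by blast
  moreover have "sigma_plus l2 = real p - l2 + (real p - 1) / (l2 - 1)"
    using root_form assms(1,2,4) by (meson less_trans)
  moreover have "(real p - 1) / (l2 - 1) \<le> (real p - 1) / (l1 - 1)"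
    using assms by (intro divide_left_mono) auto
  ultimately show False using assms(2) by linarith
qed

theorem proposition4:
  fixes p :: nat
  assumes "p \<ge> 5"
  shows "(\<forall>lam::real. lam > 4 \<longrightarrow> (eigen_in_EKperp p lam \<longleftrightarrow> F_KC p lam = 0))
       \<and> (\<exists>!lam::real. real p < lam \<and> lam < real p + 2 \<and> F_KC p lam = 0)
       \<and> (\<forall>lam::real. (4 < lam \<and> lam \<le> real p) \<or> real p + 2 \<le> lam \<longrightarrow> F_KC p lam \<noteq> 0)"
proof (intro conjI allI impI)
  fix lam :: real assume "lam > 4"
  thus "eigen_in_EKperp p lam \<longleftrightarrow> F_KC p lam = 0"
    using forward[OF assms] backward[OF assms] by blast
next
  have p4: "real p > 4" using assms by simp
  have Fp: "F_KC p (real p) > 0" using F_pos[of "real p" p] p4 by simp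
  have Fp2: "F_KC p (real p + 2) < 0" using F_neg[of p "real p + 2"] p4 by simp
  obtain x where x: "real p \<le> x" "x \<le> real p + 2" "F_KC p x = 0"
    using IVT2[of "F_KC p" "real p + 2" 0 "real p"] Fp Fp2 F_cont by force
  have x1: "real p < x" using x Fp by (cases "x = real p") auto
  have x2: "x < real p + 2" using x Fp2 by (cases "x = real p + 2") auto
  show "\<exists>!lam::real. real p < lam \<and> lam < real p + 2 \<and> F_KC p lam = 0"
  proof (rule ex1I[of _ x])
    show "real p < x \<and> x < real p + 2 \<and> F_KC p x = 0" using x1 x2 x by simp
  next
    fix y assume y: "real p < y \<and> y < real p + 2 \<and> F_KC p y = 0"
    show "y = x"
    proof (rule ccontr)
      assume "y \<noteq> x"
      hence "y < x \<or> x < y" by linarith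
      thus False
      proof
        assume "y < x" thus False using no_two_roots[of y x p] y x p4 assms by auto
      next
        assume "x < y" thus False using no_two_roots[of x y p] y x x1 p4 assms by auto
      qed
    qed
  qed
next
  fix lam :: real assume h: "(4 < lam \<and> lam \<le> real p) \<or> real p + 2 \<le> lam"
  have p4: "real p > 4" using assms by simp
  from h show "F_KC p lam \<noteq> 0"
  proof
    assume "4 < lam \<and> lam \<le> real p" thus ?thesis using F_pos[of lam p] by simp
  next
    assume "real p + 2 \<le> lam" thus ?thesis using F_neg[of p lam] p4 by simp
  qed
qed

end
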